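(* Let $G$ be a graph and let $G_r$ be the reduced graph of $G$. Then $box(G)\leq |V(G_r)|$.
   Context: All graphs are simple, finite and undirected. For a graph $G$, define $x\sim_G y$ iff $N(x)=N(y)$ (equal open neighbourhoods); this is an equivalence relation and $[x]$ denotes the class of $x$. The reduced graph $G_r$ has the equivalence classes as vertices, with distinct classes $[x]$ and $[y]$ adjacent iff $x$ and $y$ are adjacent in $G$. The boxicity $box(G)$ is the least positive integer $\ell$ such that $G$ is isomorphic to the intersection graph of a family of $\ell$-boxes (Cartesian products of $\ell$ closed bounded real intervals). *)

theory Defs
  imports Main "HOL-Analysis.Analysis"
begin

definition simple_graph :: "'a set \<Rightarrow> ('a \<Rightarrow> 'a \<Rightarrow> bool) \<Rightarrow> bool" where
  "simple_graph V E \<longleftrightarrow> finite V \<and> (\<forall>x y. E x y \<longrightarrow> x \<in> V \<and> y \<in> V)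
     \<and> (\<forall>x y. E x y \<longrightarrow> E y x) \<and> (\<forall>x. \<not> E x x)"

definition nbhd :: "'a set \<Rightarrow> ('a \<Rightarrow> 'a \<Rightarrow> bool) \<Rightarrow> 'a \<Rightarrow> 'a set" where
  "nbhd V E x = {y \<in> V. E x y}"

definition reduced_vertices :: "'a set \<Rightarrow> ('a \<Rightarrow> 'a \<Rightarrow> bool) \<Rightarrow> 'a set set" where
  "reduced_vertices V E = (\<lambda>x. {y \<in> V. nbhd V E y = nbhd V E x}) ` V"

definition is_box :: "nat \<Rightarrow> (nat \<Rightarrow> real set) \<Rightarrow> bool" where
  "is_box l B \<longleftrightarrow> (\<forall>i<l. \<exists>a b. a \<le> b \<and> B i = {a..b})"

definition boxes_intersect :: "nat \<Rightarrow> (nat \<Rightarrow> real set) \<Rightarrow> (nat \<Rightarrow> real set) \<Rightarrow> bool" where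
  "boxes_intersect l B C \<longleftrightarrow> (\<forall>i<l. B i \<inter> C i \<noteq> {})"

definition box_representable :: "'a set \<Rightarrow> ('a \<Rightarrow> 'a \<Rightarrow> bool) \<Rightarrow> nat \<Rightarrow> bool" where
  "box_representable V E l \<longleftrightarrow> (\<exists>f :: 'a \<Rightarrow> nat \<Rightarrow> real set.
      (\<forall>v\<in>V. is_box l (f v)) \<and>
      (\<forall>u\<in>V. \<forall>v\<in>V. u \<noteq> v \<longrightarrow> (E u v \<longleftrightarrow> boxes_intersect l (f u) (f v))))"

definition boxicity :: "'a set \<Rightarrow> ('a \<Rightarrow> 'a \<Rightarrow> bool) \<Rightarrow> nat" where
  "boxicity V E = (LEAST l. 0 < l \<and> box_representable V E l)"

end

theory Submission
  imports Defs
begin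

theorem corollary3p2:
  fixes V :: "'a set" and E :: "'a \<Rightarrow> 'a \<Rightarrow> bool"
  assumes "simple_graph V E" and "V \<noteq> {}"
  shows "boxicity V E \<le> card (reduced_vertices V E)"
proof -
  have finV: "finite V" and inV: "\<And>x y. E x y \<Longrightarrow> x \<in> V \<and> y \<in> V"
    and sym: "\<And>x y. E x y \<Longrightarrow> E y x" and irr: "\<And>x. \<not> E x x"
    using assms(1) unfolding simple_graph_def by auto
  define R where "R = reduced_vertices V E"
  define k where "k = card R"
  have finR: "finite R" unfolding R_def reduced_vertices_def using finV by simp
  obtain g where g: "bij_betw g {0..<k} R"
    using ex_bij_betw_nat_finite[OF finR] unfolding k_def by blast
  obtain idx where idx: "bij_betw idx V {0..<card V}"
    using ex_bij_betw_finite_nat[OF finV] by blast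
  define p where "p v = real (idx v) + 1" for v
  define M where "M = real (card V)"
  define f where "f v i = (if v \<in> g i then {p v..p v} else if (\<exists>w\<in>g i. E v w) then {0..M} else {-1..0::real})" for v i
  have gi: "\<exists>x\<in>V. g i = {y \<in> V. nbhd V E y = nbhd V E x}" if "i < k" for i
  proof -
    have "g i \<in> R" using g that unfolding bij_betw_def by auto
    then show ?thesis unfolding R_def reduced_vertices_def by blast
  qed
  have cov: "\<exists>i<k. v \<in> g i" if "v \<in> V" for v
  proof -
    have "{y \<in> V. nbhd V E y = nbhd V E v} \<in> R" unfolding R_def reduced_vertices_def using that by auto
    then obtain i where "i < k" "g i = {y \<in> V. nbhd V E y = nbhd V E v}"
    proof -
      have "g ` {0..<k} = R" using g unfolding bij_betw_def by blast
      then have "{y \<in> V. nbhd V E y = nbhd V E v} \<in> g ` {0..<k}"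
        using \<open>{y \<in> V. nbhd V E y = nbhd V E v} \<in> R\<close> by simp
      then obtain i where "i \<in> {0..<k}" "{y \<in> V. nbhd V E y = nbhd V E v} = g i"
        by (rule imageE)
      then show ?thesis using that by simp
    qed
    then show ?thesis using that by auto
  qed
  have cls: "nbhd V E u = nbhd V E v \<and> u \<in> V \<and> v \<in> V" if "i < k" "u \<in> g i" "v \<in> g i" for i u v
    using gi[OF that(1)] that by auto
  have adjcls: "E u v" if "i < k" "w \<in> g i" "u \<in> g i" "E w v" for i u v w
  proof -
    have "v \<in> nbhd V E w" using that inV unfolding nbhd_def by auto
    then have "v \<in> nbhd V E u" using cls[OF that(1) that(2) that(3)] by simp
    then show ?thesis unfolding nbhd_def by auto
  qed
  have pb: "1 \<le> p v \<and> p v \<le> M" if "v \<in> V" for v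
  proof -
    have "idx v < card V" using idx that unfolding bij_betw_def by auto
    then show ?thesis unfolding p_def M_def by linarith
  qed
  have pinj: "p u \<noteq> p v" if "u \<in> V" "v \<in> V" "u \<noteq> v" for u v
    using idx that unfolding bij_betw_def inj_on_def p_def by auto
  have kpos: "0 < k"
  proof -
    obtain v where "v \<in> V" using assms(2) by blast
    then show ?thesis using cov by fastforce
  qed
  have rep: "box_representable V E k"
    unfolding box_representable_def
  proof (intro exI[of _ f] conjI ballI impI)
    fix v assume "v \<in> V"
    have M0: "0 \<le> M" unfolding M_def by simp
    show "is_box k (f v)" unfolding is_box_def
    proof (intro allI impI)
      fix i assume "i < k"
      show "\<exists>a b. a \<le> b \<and> f v i = {a..b}"
      proof (cases "v \<in> g i")
        case True
        have "f v i = {p v..p v}" using True unfolding f_def by simp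
        then show ?thesis by (intro exI[of _ "p v"] exI[of _ "p v"]) simp
      next
        case False
        show ?thesis
        proof (cases "\<exists>w\<in>g i. E v w")
          case True then show ?thesis using False M0 unfolding f_def by auto
        next
          case F2: False
          have "f v i = {-1..0}" using False F2 unfolding f_def by simp
          then show ?thesis by (intro exI[of _ "-1"] exI[of _ "0::real"]) simp
        qed
      qed
    qed
  next
    fix u v assume uV: "u \<in> V" and vV: "v \<in> V" and ne: "u \<noteq> v"
    show "E u v \<longleftrightarrow> boxes_intersect k (f u) (f v)"
    proof
      assume euv: "E u v"
      show "boxes_intersect k (f u) (f v)" unfolding boxes_intersect_def
      proof (intro allI impI)
        fix i assume ik: "i < k"
        show "f u i \<inter> f v i \<noteq> {}"
        proof (cases "u \<in> g i")
          case True
          have "v \<notin> g i"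
          proof
            assume "v \<in> g i"
            then have "nbhd V E u = nbhd V E v" using cls[OF ik True] by blast
            moreover have "v \<in> nbhd V E u" using euv inV unfolding nbhd_def by auto
            ultimately have "v \<in> nbhd V E v" by simp
            then show False using irr unfolding nbhd_def by auto
          qed
          moreover have "\<exists>w\<in>g i. E v w" using True sym[OF euv] by blast
          ultimately show ?thesis using True pb[OF uV] unfolding f_def by auto
        next
          case False
          show ?thesis
          proof (cases "v \<in> g i")
            case True
            have "\<exists>w\<in>g i. E u w" using True euv by blast
            then show ?thesis using True False pb[OF vV] unfolding f_def by auto
          next
            case False2: False
            have "0 \<in> f u i" "0 \<in> f v i" using False False2 M_def unfolding f_def by auto
            then show ?thesis by blast
          qed
        qed
      qed
    next
      assume bi: "boxes_intersect k (f u) (f v)"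
      show "E u v"
      proof (rule ccontr)
        assume neuv: "\<not> E u v"
        obtain i where ik: "i < k" and ui: "u \<in> g i" using cov[OF uV] by blast
        have "f u i \<inter> f v i = {}"
        proof (cases "v \<in> g i")
          case True
          then show ?thesis using ui pinj[OF uV vV ne] unfolding f_def by auto
        next
          case False
          have "\<not> (\<exists>w\<in>g i. E v w)"
          proof
            assume "\<exists>w\<in>g i. E v w"
            then obtain w where "w \<in> g i" "E w v" using sym by blast
            then show False using adjcls[OF ik _ ui] neuv by blast
          qed
          then show ?thesis using ui False pb[OF uV] unfolding f_def by auto
        qed
        then show False using bi ik unfolding boxes_intersect_def by blast
      qed
    qed
  qed
  show ?thesis unfolding boxicity_def R_def[symmetric] k_def[symmetric]
    by (rule Least_le) (use kpos rep in blast)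
qed

end
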